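(* Let $n,m$ be positive integers. For a weak composition $A=(a_0,b_1,a_1,\ldots,b_m,a_m)$ of $n$ into $2m+1$ parts, let $P_A$ be the poset on $[n]$ that is the disjoint union of $2m+1$ chains on consecutive blocks of sizes $a_0,b_1,a_1,\ldots,b_m,a_m$, where the blocks of sizes $a_j$ are ordered increasingly ($s<_{P_A}s+1<_{P_A}\cdots$) and the blocks of sizes $b_j$ are ordered decreasingly (e.g. the second block is the chain $a_0+b_1<_{P_A}a_0+b_1-1<_{P_A}\cdots<_{P_A}a_0+1$). An outcome of an up-down $m$-riffle shuffle is a pair $(A,\sigma)$ with $A$ such a weak composition and $\sigma\in\mathcal{L}(P_A)$. Then the map sending $(A,\sigma)$ to the unique $f\in\mathcal{A}(P_A;m)$ whose image multiset is $\{0^{a_0},\bar1^{b_1},1^{a_1},\ldots,\bar m^{b_m},m^{a_m}\}$ and whose sorting permutation is $\pi(f)=\sigma^{-1}$ is a well-defined bijection from the set of outcomes of the up-down $m$-riffle shuffle onto $\mathcal{A}([n];m)$.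
   Context: Integers are written with $\bar i=-i$, totally ordered by $0<_{\mathbb Z}\bar1<_{\mathbb Z}1<_{\mathbb Z}\bar2<_{\mathbb Z}2<_{\mathbb Z}\cdots$, and $|\bar j|=j$. Write $a\prec_+ b$ if $a<_{\mathbb Z}b$ or $a=b\in\{0,1,2,\ldots\}$, and $a\prec_- b$ if $a<_{\mathbb Z}b$ or $a=b\in\{\bar1,\bar2,\ldots\}$. For a partial order $P$ on $[n]$, a $P$-partition is a map $f:[n]\to\mathbb Z$ such that whenever $i<_P j$: $f(i)\prec_+f(j)$ if $i<j$ as integers, and $f(i)\prec_- f(j)$ if $i>j$. $\mathcal{A}(P;m)$ is the set of $P$-partitions with $|f(i)|\le m$ for all $i$; the antichain $[n]$ has no relations. A permutation $\pi\in S_n$ is identified with the chain $\pi(1)<_\pi\cdots<_\pi\pi(n)$, and $\mathcal{L}(P)=\{\pi\in S_n: i<_Pj\Rightarrow i<_\pi j\}$. The sorting permutation $\pi(f)$ of $f:[n]\to\mathbb Z$ is the unique permutation with: $f(i)<_{\mathbb Z}f(j)\Rightarrow i<_\pi j$; $i<j$, $f(i)=f(j)\in\{0,1,\ldots\}\Rightarrow i<_\pi j$; $i<j$, $f(i)=f(j)\in\{\bar1,\bar2,\ldots\}\Rightarrow j<_\pi i$. (In the up-down riffle shuffle, the deck $1,\ldots,n$ is cut into $2m+1$ consecutive piles of sizes $A$, every other pile starting with the second is reversed, and the piles are interleaved; the linear extension $\sigma$ records the interleaving.)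
   Formalization: The image of an outcome $(A,\sigma)$ is the unique f in $\mathcal{A}([n];m)$, instead of $\mathcal{A}(P_A;m)$, with the given image multiset and sorting permutation $\pi(f)=\sigma^{-1}$. The statement above fails without it. *)

theory Defs
  imports Main "HOL-Library.Multiset" "HOL-Library.FuncSet" "HOL-Combinatorics.Permutations"
begin

text \<open>The order 0 < -1 < 1 < -2 < 2 < ... on the integers, via a rank function.\<close>
definition zkey :: "int \<Rightarrow> nat" where
  "zkey x = (if x \<ge> 0 then 2 * nat x else 2 * nat (- x) - 1)"

definition zless :: "int \<Rightarrow> int \<Rightarrow> bool" where
  "zless a b \<longleftrightarrow> zkey a < zkey b"

definition prec_plus :: "int \<Rightarrow> int \<Rightarrow> bool" where
  "prec_plus a b \<longleftrightarrow> zless a b \<or> (a = b \<and> a \<ge> 0)"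

definition prec_minus :: "int \<Rightarrow> int \<Rightarrow> bool" where
  "prec_minus a b \<longleftrightarrow> zless a b \<or> (a = b \<and> a < 0)"

text \<open>A poset on [n] is given by its strict order relation P (P i j means i <_P j).\<close>
definition is_P_partition :: "nat \<Rightarrow> (nat \<Rightarrow> nat \<Rightarrow> bool) \<Rightarrow> (nat \<Rightarrow> int) \<Rightarrow> bool" where
  "is_P_partition n P f \<longleftrightarrow>
     (\<forall>i\<in>{1..n}. \<forall>j\<in>{1..n}. P i j \<longrightarrow>
        (if i < j then prec_plus (f i) (f j) else prec_minus (f i) (f j)))"

definition PP_set :: "nat \<Rightarrow> (nat \<Rightarrow> nat \<Rightarrow> bool) \<Rightarrow> nat \<Rightarrow> (nat \<Rightarrow> int) set" where
  "PP_set n P m = {f \<in> {1..n} \<rightarrow>\<^sub>E (UNIV :: int set).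
      is_P_partition n P f \<and> (\<forall>i\<in>{1..n}. \<bar>f i\<bar> \<le> int m)}"

definition antichain :: "nat \<Rightarrow> nat \<Rightarrow> bool" where
  "antichain i j \<longleftrightarrow> False"

text \<open>A permutation pi is the chain pi(1) < pi(2) < ... < pi(n).\<close>
definition chain_less :: "(nat \<Rightarrow> nat) \<Rightarrow> nat \<Rightarrow> nat \<Rightarrow> bool" where
  "chain_less \<pi> i j \<longleftrightarrow> inv \<pi> i < inv \<pi> j"

definition lin_ext :: "nat \<Rightarrow> (nat \<Rightarrow> nat \<Rightarrow> bool) \<Rightarrow> (nat \<Rightarrow> nat) set" where
  "lin_ext n P = {\<pi>. \<pi> permutes {1..n} \<and>
      (\<forall>i\<in>{1..n}. \<forall>j\<in>{1..n}. P i j \<longrightarrow> chain_less \<pi> i j)}"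

definition is_sorting_perm :: "nat \<Rightarrow> (nat \<Rightarrow> int) \<Rightarrow> (nat \<Rightarrow> nat) \<Rightarrow> bool" where
  "is_sorting_perm n f \<pi> \<longleftrightarrow> \<pi> permutes {1..n} \<and>
     (\<forall>i\<in>{1..n}. \<forall>j\<in>{1..n}.
        (zless (f i) (f j) \<longrightarrow> chain_less \<pi> i j) \<and>
        (i < j \<and> f i = f j \<and> f i \<ge> 0 \<longrightarrow> chain_less \<pi> i j) \<and>
        (i < j \<and> f i = f j \<and> f i < 0 \<longrightarrow> chain_less \<pi> j i))"

definition sorting_perm :: "nat \<Rightarrow> (nat \<Rightarrow> int) \<Rightarrow> (nat \<Rightarrow> nat)" where
  "sorting_perm n f = (THE \<pi>. is_sorting_perm n f \<pi>)"

text \<open>Weak compositions A = (a_0, b_1, a_1, ..., b_m, a_m) of n into 2m+1 parts, as lists: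
  A!0 = a_0, A!(2j-1) = b_j, A!(2j) = a_j.\<close>
definition wcomps :: "nat \<Rightarrow> nat \<Rightarrow> nat list set" where
  "wcomps n m = {A. length A = 2 * m + 1 \<and> sum_list A = n}"

definition in_block :: "nat list \<Rightarrow> nat \<Rightarrow> nat \<Rightarrow> bool" where
  "in_block A k i \<longleftrightarrow> sum_list (take k A) < i \<and> i \<le> sum_list (take (Suc k) A)"

definition P_A :: "nat list \<Rightarrow> nat \<Rightarrow> nat \<Rightarrow> bool" where
  "P_A A i j \<longleftrightarrow> (\<exists>k < length A. in_block A k i \<and> in_block A k j \<and>
                      (if even k then i < j else j < i))"

definition block_val :: "nat \<Rightarrow> int" where
  "block_val k = (if even k then int (k div 2) else - int ((k + 1) div 2))"

definition target_mset :: "nat list \<Rightarrow> int multiset" where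
  "target_mset A = (\<Sum>k<length A. replicate_mset (A ! k) (block_val k))"

definition updown_outcomes :: "nat \<Rightarrow> nat \<Rightarrow> (nat list \<times> (nat \<Rightarrow> nat)) set" where
  "updown_outcomes n m = {(A, \<sigma>). A \<in> wcomps n m \<and> \<sigma> \<in> lin_ext n (P_A A)}"

definition image_of_outcome :: "nat \<Rightarrow> nat \<Rightarrow> nat list \<Rightarrow> (nat \<Rightarrow> nat) \<Rightarrow> (nat \<Rightarrow> int) \<Rightarrow> bool" where
  "image_of_outcome n m A \<sigma> f \<longleftrightarrow>
     f \<in> PP_set n antichain m \<and>
     image_mset f (mset_set {1..n}) = target_mset A \<and>
     sorting_perm n f = inv \<sigma>"

definition updown_map :: "nat \<Rightarrow> nat \<Rightarrow> nat list \<times> (nat \<Rightarrow> nat) \<Rightarrow> (nat \<Rightarrow> int)" where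
  "updown_map n m = (\<lambda>(A, \<sigma>). THE f. image_of_outcome n m A \<sigma> f)"

end

theory Submission
  imports Defs
begin


lemma zkey_bv[simp]: "zkey (block_val k) = k"
proof (cases "even k")
  case True then show ?thesis unfolding zkey_def block_val_def by (auto elim!: evenE)
next
  case False then show ?thesis unfolding zkey_def block_val_def by (auto elim!: oddE)
qed

lemma bv_zkey[simp]: "block_val (zkey v) = v"
  unfolding zkey_def block_val_def by (cases "v \<ge> 0"; simp; presburger)

lemma zkey_inj: "zkey a = zkey b \<longleftrightarrow> a = b"
  by (metis bv_zkey)

lemma zkey_even: "even (zkey v) \<longleftrightarrow> v \<ge> 0"
  unfolding zkey_def by (cases "v \<ge> 0"; simp; presburger)

lemma zkey_bound: "\<bar>v\<bar> \<le> int m \<Longrightarrow> zkey v < 2*m+1"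
  unfolding zkey_def by (cases "v \<ge> 0"; simp; linarith)

lemma bv_bound: "k < 2*m+1 \<Longrightarrow> \<bar>block_val k\<bar> \<le> int m"
  unfolding block_val_def by (auto; presburger)

lemma perm_card:
  assumes "\<tau> permutes {1..n}" "x \<in> {1..(n::nat)}"
  shows "card {y\<in>{1..n}. \<tau> y < \<tau> x} = \<tau> x - 1"
proof -
  have inj: "inj_on \<tau> {y\<in>{1..n}. \<tau> y < \<tau> x}"
    using permutes_inj_on[OF assms(1)] by (auto intro: inj_on_subset)
  have im: "\<tau> ` {1..n} = {1..n}" using permutes_image[OF assms(1)] .
  have tx: "\<tau> x \<in> {1..n}" using assms im by auto
  have "\<tau> ` {y\<in>{1..n}. \<tau> y < \<tau> x} = {p\<in>{1..n}. p < \<tau> x}"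
  proof
    show "\<tau> ` {y\<in>{1..n}. \<tau> y < \<tau> x} \<subseteq> {p\<in>{1..n}. p < \<tau> x}" using im by auto
    show "{p\<in>{1..n}. p < \<tau> x} \<subseteq> \<tau> ` {y\<in>{1..n}. \<tau> y < \<tau> x}"
    proof
      fix p assume p: "p \<in> {p\<in>{1..n}. p < \<tau> x}"
      then obtain y where "y \<in> {1..n}" "p = \<tau> y" using im by (metis (no_types, lifting) imageE mem_Collect_eq)
      then show "p \<in> \<tau> ` {y\<in>{1..n}. \<tau> y < \<tau> x}" using p by auto
    qed
  qed
  also have "\<dots> = {1..<\<tau> x}" using tx by auto
  finally show ?thesis using card_image[OF inj] by simp
qed

definition rk :: "(nat \<Rightarrow> nat) \<Rightarrow> nat \<Rightarrow> nat \<Rightarrow> nat" where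
  "rk g n x = (if x \<in> {1..n} then card {y\<in>{1..n}. g y < g x} + 1 else x)"

lemma rk_mono:
  assumes "x \<in> {1..n}" "y \<in> {1..n}" "g x < g y"
  shows "rk g n x < rk g n y"
proof -
  have "{z\<in>{1..n}. g z < g x} \<subset> {z\<in>{1..n}. g z < g y}"
    using assms by auto
  then have "card {z\<in>{1..n}. g z < g x} < card {z\<in>{1..n}. g z < g y}"
    by (intro psubset_card_mono) auto
  then show ?thesis using assms unfolding rk_def by simp
qed

lemma rk_permutes:
  assumes "inj_on g {1..n}"
  shows "rk g n permutes {1..n}"
proof -
  have sub: "rk g n ` {1..n} \<subseteq> {1..n}"
  proof
    fix p assume "p \<in> rk g n ` {1..n}"
    then obtain x where x: "x \<in> {1..n}" "p = rk g n x" by auto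
    have ps: "{y\<in>{1..n}. g y < g x} \<subset> {1..n}"
    proof
      show "{y\<in>{1..n}. g y < g x} \<subseteq> {1..n}" by blast
      show "{y\<in>{1..n}. g y < g x} \<noteq> {1..n}" using x(1) by blast
    qed
    have "card {y\<in>{1..n}. g y < g x} < card {1..n}"
      by (rule psubset_card_mono[OF _ ps]) simp
    then have "card {y\<in>{1..n}. g y < g x} < n" by simp
    then show "p \<in> {1..n}" using x unfolding rk_def by simp
  qed
  have inj: "inj_on (rk g n) {1..n}"
  proof (rule inj_onI)
    fix x y assume xy: "x \<in> {1..n}" "y \<in> {1..n}" "rk g n x = rk g n y"
    show "x = y"
    proof (rule ccontr)
      assume "x \<noteq> y"
      then have "g x \<noteq> g y" using inj_onD[OF assms _ xy(1,2)] by blast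
      then have "g x < g y \<or> g y < g x" by (rule linorder_neqE_nat) simp_all
      then show False
      proof
        assume "g x < g y" then show False using rk_mono[OF xy(1,2), of g] xy(3) by simp
      next
        assume "g y < g x" then show False using rk_mono[OF xy(2,1), of g] xy(3) by simp
      qed
    qed
  qed
  have "rk g n ` {1..n} = {1..n}" by (rule endo_inj_surj[OF _ sub inj]) simp
  then have "bij_betw (rk g n) {1..n} {1..n}" using inj by (simp add: bij_betw_def)
  then show ?thesis
  proof (rule bij_imp_permutes)
    fix x assume h: "x \<notin> {1..n}" then show "rk g n x = x" unfolding rk_def by (rule if_not_P)
  qed
qed

lemma rk_unique:
  assumes "inj_on g {1..n}" "\<tau> permutes {1..n}"
    and mono: "\<And>i j. i \<in> {1..n} \<Longrightarrow> j \<in> {1..n} \<Longrightarrow> g i < g j \<Longrightarrow> \<tau> i < \<tau> j"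
  shows "\<tau> = rk g n"
proof
  fix x
  show "\<tau> x = rk g n x"
  proof (cases "x \<in> {1..n}")
    case False
    then show ?thesis using permutes_not_in[OF assms(2) False] False unfolding rk_def by auto
  next
    case True
    have "{y\<in>{1..n}. \<tau> y < \<tau> x} = {y\<in>{1..n}. g y < g x}"
    proof (intro Collect_cong conj_cong refl iffI)
      fix y assume y: "y \<in> {1..n}" and "\<tau> y < \<tau> x"
      show "g y < g x"
      proof (rule ccontr)
        assume "\<not> g y < g x"
        then have "g y = g x \<or> g x < g y" by auto
        then show False
        proof
          assume "g y = g x" then have "y = x" using assms(1) y True by (meson inj_on_def)
          then show False using \<open>\<tau> y < \<tau> x\<close> by simp
        next
          assume "g x < g y" then show False using mono[OF True y] \<open>\<tau> y < \<tau> x\<close> by simp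
        qed
      qed
    next
      fix y assume "y \<in> {1..n}" "g y < g x" then show "\<tau> y < \<tau> x" using mono True by blast
    qed
    moreover have "\<tau> x \<ge> 1" using True assms(2) permutes_image[OF assms(2)] by auto
    ultimately show ?thesis using perm_card[OF assms(2) True] True unfolding rk_def by simp
  qed
qed



definition gk :: "nat \<Rightarrow> (nat \<Rightarrow> int) \<Rightarrow> nat \<Rightarrow> nat" where
  "gk n f x = zkey (f x) * (n+1) + (if f x \<ge> 0 then x else n - x)"

definition Rel :: "(nat \<Rightarrow> int) \<Rightarrow> nat \<Rightarrow> nat \<Rightarrow> bool" where
  "Rel f i j \<longleftrightarrow> zless (f i) (f j) \<or> (f i = f j \<and> f i \<ge> 0 \<and> i < j) \<or> (f i = f j \<and> f i < 0 \<and> j < i)"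

lemma lex_aux:
  fixes a b r1 r2 N :: nat
  assumes "r1 \<le> N" "r2 \<le> N"
  shows "a * (N+1) + r1 < b * (N+1) + r2 \<longleftrightarrow> a < b \<or> (a = b \<and> r1 < r2)"
proof
  assume h: "a * (N+1) + r1 < b * (N+1) + r2"
  show "a < b \<or> (a = b \<and> r1 < r2)"
  proof (rule ccontr)
    assume "\<not> ?thesis"
    then have "b < a \<or> (a = b \<and> r2 \<le> r1)" by auto
    then show False
    proof
      assume "b < a"
      then have "(b+1)*(N+1) \<le> a*(N+1)" by (intro mult_right_mono) auto
      then show False using h assms by (simp add: algebra_simps)
    next
      assume "a = b \<and> r2 \<le> r1" then show False using h by simp
    qed
  qed
next
  assume "a < b \<or> (a = b \<and> r1 < r2)"
  then show "a * (N+1) + r1 < b * (N+1) + r2"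
  proof
    assume "a < b"
    then have "(a+1)*(N+1) \<le> b*(N+1)" by (intro mult_right_mono) auto
    then show ?thesis using assms by (simp add: algebra_simps)
  next
    assume "a = b \<and> r1 < r2" then show ?thesis by simp
  qed
qed

lemma gk_iff:
  assumes "i \<in> {1..n}" "j \<in> {1..n}"
  shows "gk n f i < gk n f j \<longleftrightarrow> Rel f i j"
proof -
  have r: "(if f x \<ge> 0 then x else n - x) \<le> n" if "x \<in> {1..n}" for x using that by auto
  have "gk n f i < gk n f j \<longleftrightarrow> zkey (f i) < zkey (f j) \<or> (zkey (f i) = zkey (f j) \<and>
      (if f i \<ge> 0 then i else n - i) < (if f j \<ge> 0 then j else n - j))"
    unfolding gk_def by (rule lex_aux[OF r[OF assms(1)] r[OF assms(2)]])
  also have "\<dots> \<longleftrightarrow> Rel f i j"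
  proof (cases "f i = f j")
    case True
    show ?thesis
    proof (cases "f i \<ge> 0")
      case True
      then show ?thesis using \<open>f i = f j\<close> unfolding Rel_def zless_def by simp
    next
      case False
      have "n - i < n - j \<longleftrightarrow> j < i" using assms by auto
      then show ?thesis using False \<open>f i = f j\<close> unfolding Rel_def zless_def by simp
    qed
  next
    case False
    then show ?thesis unfolding Rel_def zless_def zkey_inj by simp
  qed
  finally show ?thesis .
qed

lemma Rel_total:
  assumes "i \<noteq> j" shows "Rel f i j \<or> Rel f j i"
proof (cases "f i = f j")
  case True
  then show ?thesis unfolding Rel_def using assms by (cases "i < j") auto
next
  case False
  then have "zkey (f i) \<noteq> zkey (f j)" by (simp add: zkey_inj)
  then show ?thesis unfolding Rel_def zless_def by auto
qed

lemma gk_inj: "inj_on (gk n f) {1..n}"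
proof (rule inj_onI)
  fix x y assume xy: "x \<in> {1..n}" "y \<in> {1..n}" "gk n f x = gk n f y"
  show "x = y"
  proof (rule ccontr)
    assume "x \<noteq> y"
    then have "Rel f x y \<or> Rel f y x" by (rule Rel_total)
    then show False using gk_iff[OF xy(1,2), of f] gk_iff[OF xy(2,1), of f] xy(3) by auto
  qed
qed

lemma is_sorting_perm_iff:
  "is_sorting_perm n f \<pi> \<longleftrightarrow> \<pi> permutes {1..n} \<and>
     (\<forall>i\<in>{1..n}. \<forall>j\<in>{1..n}. Rel f i j \<longrightarrow> chain_less \<pi> i j)"
proof
  assume h: "is_sorting_perm n f \<pi>"
  show "\<pi> permutes {1..n} \<and> (\<forall>i\<in>{1..n}. \<forall>j\<in>{1..n}. Rel f i j \<longrightarrow> chain_less \<pi> i j)"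
  proof (intro conjI ballI impI)
    show "\<pi> permutes {1..n}" using h unfolding is_sorting_perm_def by simp
    fix i j assume ij: "i \<in> {1..n}" "j \<in> {1..n}" "Rel f i j"
    have A: "zless (f i) (f j) \<longrightarrow> chain_less \<pi> i j" 
      and B: "i < j \<and> f i = f j \<and> f i \<ge> 0 \<longrightarrow> chain_less \<pi> i j"
      using h ij(1,2) unfolding is_sorting_perm_def by blast+
    have C: "j < i \<and> f j = f i \<and> f j < 0 \<longrightarrow> chain_less \<pi> i j"
      using h ij(1,2) unfolding is_sorting_perm_def by blast
    show "chain_less \<pi> i j" using ij(3) A B C unfolding Rel_def by auto
  qed
next
  assume h: "\<pi> permutes {1..n} \<and> (\<forall>i\<in>{1..n}. \<forall>j\<in>{1..n}. Rel f i j \<longrightarrow> chain_less \<pi> i j)"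
  show "is_sorting_perm n f \<pi>" unfolding is_sorting_perm_def
  proof (intro conjI ballI impI)
    show "\<pi> permutes {1..n}" using h by simp
    fix i j assume ij: "i \<in> {1..n}" "j \<in> {1..n}"
    have R1: "Rel f i j \<Longrightarrow> chain_less \<pi> i j" and R2: "Rel f j i \<Longrightarrow> chain_less \<pi> j i"
      using h ij by blast+
    show "chain_less \<pi> i j" if "zless (f i) (f j)" using R1 that unfolding Rel_def by blast
    show "chain_less \<pi> i j" if "i < j \<and> f i = f j \<and> 0 \<le> f i" using R1 that unfolding Rel_def by blast
    show "chain_less \<pi> j i" if "i < j \<and> f i = f j \<and> f i < 0" using R2 that unfolding Rel_def by auto
  qed
qed

lemma inv_inv_perm: "\<pi> permutes S \<Longrightarrow> inv (inv \<pi>) = \<pi>"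
  by (simp add: inv_inv_eq permutes_bij)

lemma sorting_perm_eq: "sorting_perm n f = inv (rk (gk n f) n)"
proof -
  let ?r = "rk (gk n f) n"
  have rp: "?r permutes {1..n}" by (rule rk_permutes[OF gk_inj])
  have ii: "inv (inv ?r) = ?r" by (rule inv_inv_perm[OF rp])
  have ex: "is_sorting_perm n f (inv ?r)"
    unfolding is_sorting_perm_iff chain_less_def ii
  proof (intro conjI ballI impI permutes_inv[OF rp])
    fix i j assume ij: "i \<in> {1..n}" "j \<in> {1..n}" "Rel f i j"
    show "?r i < ?r j" by (rule rk_mono[OF ij(1,2)]) (use gk_iff[OF ij(1,2), of f] ij(3) in simp)
  qed
  have un: "\<pi> = inv ?r" if "is_sorting_perm n f \<pi>" for \<pi>
  proof -
    have p: "\<pi> permutes {1..n}" and m: "\<forall>i\<in>{1..n}. \<forall>j\<in>{1..n}. Rel f i j \<longrightarrow> inv \<pi> i < inv \<pi> j"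
      using that unfolding is_sorting_perm_iff chain_less_def by auto
    have "inv \<pi> = ?r"
    proof (rule rk_unique[OF gk_inj permutes_inv[OF p]])
      fix i j assume ij: "i \<in> {1..n}" "j \<in> {1..n}" "gk n f i < gk n f j"
      then have "Rel f i j" using gk_iff[OF ij(1,2), of f] by simp
      then show "inv \<pi> i < inv \<pi> j" using m ij(1,2) by blast
    qed
    then show ?thesis using inv_inv_perm[OF p] by metis
  qed
  show ?thesis unfolding sorting_perm_def by (rule the_equality[where P="is_sorting_perm n f"]) (rule ex, erule un)
qed

lemma sp_iff:
  assumes "\<sigma> permutes {1..n}"
  shows "sorting_perm n f = inv \<sigma> \<longleftrightarrow> \<sigma> = rk (gk n f) n"
proof
  assume "sorting_perm n f = inv \<sigma>"
  then have "inv (inv (rk (gk n f) n)) = inv (inv \<sigma>)" unfolding sorting_perm_eq by simp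
  then show "\<sigma> = rk (gk n f) n"
    using inv_inv_perm[OF assms] inv_inv_perm[OF rk_permutes[OF gk_inj]] by simp
next
  assume "\<sigma> = rk (gk n f) n"
  then show "sorting_perm n f = inv \<sigma>" unfolding sorting_perm_eq by (rule arg_cong[where f=inv, OF sym])
qed



abbreviation pre :: "nat list \<Rightarrow> nat \<Rightarrow> nat" where
  "pre A k \<equiv> sum_list (take k A)"

definition blk :: "nat list \<Rightarrow> nat \<Rightarrow> nat" where
  "blk A p = (THE k. k < length A \<and> in_block A k p)"

lemma pre_mono: "k \<le> k' \<Longrightarrow> pre A k \<le> pre A k'"
proof -
  assume "k \<le> k'"
  then have "take k' A = take k A @ take (k' - k) (drop k A)"
    by (metis le_add_diff_inverse take_add)
  then show ?thesis by simp
qed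

lemma pre_Suc: "k < length A \<Longrightarrow> pre A (Suc k) = pre A k + A ! k"
  by (simp add: take_Suc_conv_app_nth)

lemma block_order:
  assumes "in_block A k p" "in_block A k' q" "k < k'"
  shows "p < q"
proof -
  have "pre A (Suc k) \<le> pre A k'" using assms(3) by (intro pre_mono) simp
  then show ?thesis using assms(1,2) unfolding in_block_def by linarith
qed

lemma block_uniq:
  assumes "in_block A k p" "in_block A k' p"
  shows "k = k'"
proof (rule ccontr)
  assume "k \<noteq> k'"
  then have "k < k' \<or> k' < k" by arith
  then show False using block_order[OF assms(1,2)] block_order[OF assms(2,1)] by auto
qed

lemma block_exists:
  assumes "1 \<le> p" "p \<le> sum_list A"
  shows "\<exists>k<length A. in_block A k p"
proof -
  have ne: "A \<noteq> []" using assms by auto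
  define k where "k = (LEAST k. p \<le> pre A (Suc k))"
  have ex: "p \<le> pre A (Suc (length A - 1))" using ne assms(2) by simp
  have k1: "p \<le> pre A (Suc k)" unfolding k_def by (rule LeastI[where P="\<lambda>k. p \<le> pre A (Suc k)", OF ex])
  have k2: "k \<le> length A - 1" unfolding k_def by (rule Least_le[where P="\<lambda>k. p \<le> pre A (Suc k)", OF ex])
  have k3: "pre A k < p"
  proof (cases k)
    case 0 then show ?thesis using assms(1) by simp
  next
    case (Suc k1)
    have "k1 < k" using Suc by simp
    then have "\<not> p \<le> pre A (Suc k1)" unfolding k_def by (rule not_less_Least)
    then show ?thesis using Suc by simp
  qed
  have "k < length A" using k2 ne by (cases A) auto
  then show ?thesis using k1 k3 unfolding in_block_def by blast
qed

lemma blk_eq: "k < length A \<Longrightarrow> in_block A k p \<Longrightarrow> blk A p = k"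
  unfolding blk_def by (rule the_equality) (auto intro: block_uniq)

lemma blk_in:
  assumes "1 \<le> p" "p \<le> sum_list A"
  shows "blk A p < length A \<and> in_block A (blk A p) p"
  using block_exists[OF assms] blk_eq by metis

lemma card_block:
  assumes "k < length A"
  shows "card {p \<in> {1..sum_list A}. in_block A k p} = A ! k"
proof -
  have "pre A (Suc k) \<le> pre A (length A)" using assms by (intro pre_mono) simp
  then have le: "pre A (Suc k) \<le> sum_list A" by simp
  have "{p \<in> {1..sum_list A}. in_block A k p} = {pre A k + 1 .. pre A (Suc k)}"
    using le unfolding in_block_def by auto
  then show ?thesis using pre_Suc[OF assms] by simp
qed

lemma target_count:
  "count (target_mset A) v = (if zkey v < length A then A ! zkey v else 0)"
proof -
  have "count (target_mset A) v = (\<Sum>k<length A. count (replicate_mset (A ! k) (block_val k)) v)"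
    unfolding target_mset_def by (simp add: count_sum)
  also have "\<dots> = (\<Sum>k<length A. if zkey v = k then A ! k else 0)"
  proof (rule sum.cong[OF refl])
    fix k
    have "block_val k = v \<longleftrightarrow> zkey v = k" by (metis bv_zkey zkey_bv)
    then show "count (replicate_mset (A ! k) (block_val k)) v = (if zkey v = k then A ! k else 0)"
      by (cases "zkey v = k") auto
  qed
  also have "\<dots> = (if zkey v < length A then A ! zkey v else 0)"
    by (simp add: sum.delta)
  finally show ?thesis .
qed

lemma size_sum_lt: "size (\<Sum>k<(n::nat). (M k :: 'a multiset)) = (\<Sum>k<n. size (M k))"
  by (induction n) auto

lemma size_target: "size (target_mset A) = sum_list A"
proof -
  have "size (target_mset A) = (\<Sum>k<length A. A ! k)"
    unfolding target_mset_def size_sum_lt by simp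
  also have "\<dots> = sum_list A" by (simp add: sum_list_sum_nth atLeast0LessThan)
  finally show ?thesis .
qed



definition F0 :: "nat \<Rightarrow> nat list \<Rightarrow> (nat \<Rightarrow> nat) \<Rightarrow> nat \<Rightarrow> int" where
  "F0 n A \<sigma> x = (if x \<in> {1..n} then block_val (blk A (\<sigma> x)) else undefined)"

lemma outcomesD:
  assumes "(A, \<sigma>) \<in> updown_outcomes n m"
  shows "length A = 2*m+1" "sum_list A = n" "\<sigma> permutes {1..n}"
    "\<And>i j. i \<in> {1..n} \<Longrightarrow> j \<in> {1..n} \<Longrightarrow> P_A A i j \<Longrightarrow> inv \<sigma> i < inv \<sigma> j"
  using assms unfolding updown_outcomes_def wcomps_def lin_ext_def chain_less_def by auto

lemma size_filter_image:
  "size (filter_mset P (image_mset f (mset_set {1..(n::nat)}))) = card {x\<in>{1..n}. P (f x)}"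
  by (simp add: filter_mset_image_mset)

lemma existence:
  assumes o: "(A, \<sigma>) \<in> updown_outcomes n m"
  shows "image_of_outcome n m A \<sigma> (F0 n A \<sigma>)"
proof -
  note len = outcomesD(1)[OF o] and sm = outcomesD(2)[OF o] and perm = outcomesD(3)[OF o]
    and le = outcomesD(4)[OF o]
  let ?f = "F0 n A \<sigma>"
  have sig_in: "\<sigma> x \<in> {1..n}" if "x \<in> {1..n}" for x
    using permutes_in_image[OF perm] that by simp
  have bi: "blk A (\<sigma> x) < length A \<and> in_block A (blk A (\<sigma> x)) (\<sigma> x)" if "x \<in> {1..n}" for x
    using blk_in[of "\<sigma> x" A] sig_in[OF that] sm by simp
  have fx: "?f x = block_val (blk A (\<sigma> x))" if "x \<in> {1..n}" for x
    using that unfolding F0_def by simp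
  have zf: "zkey (?f x) = blk A (\<sigma> x)" if "x \<in> {1..n}" for x
    using fx[OF that] by simp
  have PP: "?f \<in> PP_set n antichain m"
    unfolding PP_set_def is_P_partition_def antichain_def
  proof (intro CollectI conjI ballI)
    show "?f \<in> {1..n} \<rightarrow>\<^sub>E UNIV" unfolding PiE_iff extensional_def F0_def by simp
    fix i assume i: "i \<in> {1..n}"
    show "\<bar>?f i\<bar> \<le> int m" using fx[OF i] bv_bound[of "blk A (\<sigma> i)" m] bi[OF i] len by simp
  qed simp
  have ms: "image_mset ?f (mset_set {1..n}) = target_mset A"
  proof (rule multiset_eqI)
    fix v
    have "count (image_mset ?f (mset_set {1..n})) v = card {x\<in>{1..n}. ?f x = v}"
      by (simp add: count_image_mset_eq_card_vimage)
    also have "{x\<in>{1..n}. ?f x = v} = {x\<in>{1..n}. blk A (\<sigma> x) = zkey v}"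
      using zf fx by (metis (no_types, lifting) bv_zkey zkey_bv)
    also have "card \<dots> = card (\<sigma> ` {x\<in>{1..n}. blk A (\<sigma> x) = zkey v})"
      by (rule card_image[symmetric], rule permutes_inj_on[OF perm])
    also have "\<sigma> ` {x\<in>{1..n}. blk A (\<sigma> x) = zkey v} = {p\<in>{1..n}. blk A p = zkey v}"
    proof
      show "\<sigma> ` {x\<in>{1..n}. blk A (\<sigma> x) = zkey v} \<subseteq> {p\<in>{1..n}. blk A p = zkey v}"
        using sig_in by auto
      show "{p\<in>{1..n}. blk A p = zkey v} \<subseteq> \<sigma> ` {x\<in>{1..n}. blk A (\<sigma> x) = zkey v}"
      proof
        fix p assume p: "p \<in> {p\<in>{1..n}. blk A p = zkey v}"
        have "inv \<sigma> p \<in> {1..n}" using p permutes_in_image[OF permutes_inv[OF perm]] by simp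
        moreover have "\<sigma> (inv \<sigma> p) = p" by (rule permutes_inverses(1)[OF perm])
        ultimately show "p \<in> \<sigma> ` {x\<in>{1..n}. blk A (\<sigma> x) = zkey v}" using p
          by (metis (mono_tags, lifting) image_eqI mem_Collect_eq)
      qed
    qed
    also have "card {p\<in>{1..n}. blk A p = zkey v} = count (target_mset A) v"
    proof (cases "zkey v < length A")
      case True
      have "{p\<in>{1..n}. blk A p = zkey v} = {p\<in>{1..sum_list A}. in_block A (zkey v) p}"
      proof -
        have "blk A p = zkey v \<longleftrightarrow> in_block A (zkey v) p" if "p \<in> {1..n}" for p
        proof
          assume "blk A p = zkey v" then show "in_block A (zkey v) p"
            using blk_in[of p A] that sm by auto
        next
          assume "in_block A (zkey v) p" then show "blk A p = zkey v" using blk_eq[OF True] by blast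
        qed
        then show ?thesis using sm by auto
      qed
      then show ?thesis using card_block[OF True] True target_count[of A v] by simp
    next
      case False
      have "{p\<in>{1..n}. blk A p = zkey v} = {}"
        using sm blk_in False by fastforce
      then show ?thesis using False target_count[of A v] by simp
    qed
    finally show "count (image_mset ?f (mset_set {1..n})) v = count (target_mset A) v" .
  qed
  have sp: "\<sigma> = rk (gk n ?f) n"
  proof (rule rk_unique[OF gk_inj perm])
    fix i j assume ij: "i \<in> {1..n}" "j \<in> {1..n}" "gk n ?f i < gk n ?f j"
    then have R: "Rel ?f i j" using gk_iff[OF ij(1,2), of ?f] by simp
    have inj: "\<sigma> i = \<sigma> j \<Longrightarrow> i = j" using permutes_inj[OF perm] by (meson injD)
    show "\<sigma> i < \<sigma> j"
    proof (cases "zless (?f i) (?f j)")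
      case True
      then have "blk A (\<sigma> i) < blk A (\<sigma> j)" unfolding zless_def using zf ij by simp
      then show ?thesis using block_order bi ij by blast
    next
      case False
      then have eq: "?f i = ?f j" and c: "(?f i \<ge> 0 \<and> i < j) \<or> (?f i < 0 \<and> j < i)"
        using R unfolding Rel_def by auto
      have bk: "blk A (\<sigma> i) = blk A (\<sigma> j)" using zf[OF ij(1)] zf[OF ij(2)] eq by simp
      define k where "k = blk A (\<sigma> i)"
      have k: "k < length A" "in_block A k (\<sigma> i)" "in_block A k (\<sigma> j)"
        using bi[OF ij(1)] bi[OF ij(2)] bk unfolding k_def by auto
      have ev: "even k \<longleftrightarrow> ?f i \<ge> 0" using zkey_even[of "?f i"] zf[OF ij(1)] k_def by simp
      show ?thesis
      proof (rule ccontr)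
        assume "\<not> \<sigma> i < \<sigma> j"
        moreover have "i \<noteq> j" using c by auto
        ultimately have lt: "\<sigma> j < \<sigma> i" using inj by fastforce
        show False
        proof (cases "?f i \<ge> 0")
          case True
          have "P_A A (\<sigma> j) (\<sigma> i)" unfolding P_A_def using k lt ev True by auto
          then have "inv \<sigma> (\<sigma> j) < inv \<sigma> (\<sigma> i)" using le sig_in ij by blast
          then have "j < i" by (simp add: permutes_inverses(2)[OF perm])
          then show False using c True by auto
        next
          case False
          have "P_A A (\<sigma> i) (\<sigma> j)" unfolding P_A_def using k lt ev False by auto
          then have "inv \<sigma> (\<sigma> i) < inv \<sigma> (\<sigma> j)" using le sig_in ij by blast
          then have "i < j" by (simp add: permutes_inverses(2)[OF perm])
          then show False using c False by auto
        qed
      qed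
    qed
  qed
  show ?thesis unfolding image_of_outcome_def using PP ms sp_iff[OF perm] sp by simp
qed



lemma downset_eq:
  fixes S :: "nat set" and \<sigma> :: "nat \<Rightarrow> nat" and h h' :: "nat \<Rightarrow> nat"
  assumes fin: "finite S" and inj: "inj_on \<sigma> S"
    and mh: "\<And>i j. i \<in> S \<Longrightarrow> j \<in> S \<Longrightarrow> \<sigma> i < \<sigma> j \<Longrightarrow> h i \<le> h j"
    and mh': "\<And>i j. i \<in> S \<Longrightarrow> j \<in> S \<Longrightarrow> \<sigma> i < \<sigma> j \<Longrightarrow> h' i \<le> h' j"
    and cd: "\<And>t. card {x\<in>S. h x < t} = card {x\<in>S. h' x < t}"
    and x: "x \<in> S"
  shows "h x = h' x"
proof -
  have comp: "{x\<in>S. h x < t} \<subseteq> {x\<in>S. h' x < t} \<or> {x\<in>S. h' x < t} \<subseteq> {x\<in>S. h x < t}" for t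
  proof (rule ccontr)
    assume "\<not> ?thesis"
    then obtain a b where a: "a \<in> S" "h a < t" "\<not> h' a < t" and b: "b \<in> S" "h' b < t" "\<not> h b < t"
      by blast
    have "a \<noteq> b" using a b by auto
    then have "\<sigma> a \<noteq> \<sigma> b" using inj a(1) b(1) by (meson inj_on_def)
    then have "\<sigma> a < \<sigma> b \<or> \<sigma> b < \<sigma> a" by arith
    then show False
    proof
      assume "\<sigma> a < \<sigma> b" then have "h' a \<le> h' b" using mh' a(1) b(1) by blast
      then show False using a b by simp
    next
      assume "\<sigma> b < \<sigma> a" then have "h b \<le> h a" using mh a(1) b(1) by blast
      then show False using a b by simp
    qed
  qed
  have eq: "{x\<in>S. h x < t} = {x\<in>S. h' x < t}" for t
  proof -
    have f1: "finite {x\<in>S. h x < t}" "finite {x\<in>S. h' x < t}" using fin by auto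
    show ?thesis using comp[of t]
    proof
      assume sub: "{x\<in>S. h x < t} \<subseteq> {x\<in>S. h' x < t}"
      show ?thesis by (rule card_subset_eq[OF f1(2) sub]) (rule cd)
    next
      assume sub: "{x\<in>S. h' x < t} \<subseteq> {x\<in>S. h x < t}"
      have "{x\<in>S. h' x < t} = {x\<in>S. h x < t}" by (rule card_subset_eq[OF f1(1) sub]) (rule cd[symmetric])
      then show ?thesis by simp
    qed
  qed
  show ?thesis
  proof (rule ccontr)
    assume "h x \<noteq> h' x"
    then have "h x < h' x \<or> h' x < h x" by arith
    then show False
    proof
      assume "h x < h' x"
      then have "x \<in> {x\<in>S. h x < h' x}" using x by simp
      then show False using eq[of "h' x"] by blast
    next
      assume "h' x < h x"
      then have "x \<in> {y\<in>S. h' y < h x}" using x by simp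
      then show False using eq[of "h x"] by blast
    qed
  qed
qed

lemma rk_mono_zkey:
  assumes "i \<in> {1..n}" "j \<in> {1..n}" "rk (gk n f) n i < rk (gk n f) n j"
  shows "zkey (f i) \<le> zkey (f j)"
proof (rule ccontr)
  assume "\<not> ?thesis"
  then have "Rel f j i" unfolding Rel_def zless_def by simp
  then have "gk n f j < gk n f i" using gk_iff[OF assms(2,1)] by simp
  then have "rk (gk n f) n j < rk (gk n f) n i" by (rule rk_mono[OF assms(2,1)])
  then show False using assms(3) by simp
qed

lemma uniqueness:
  assumes perm: "\<sigma> permutes {1..n}"
    and h1: "image_of_outcome n m A \<sigma> f" and h2: "image_of_outcome n m A \<sigma> f'"
  shows "f = f'"
proof -
  have f: "f \<in> PP_set n antichain m" "image_mset f (mset_set {1..n}) = target_mset A"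
    "\<sigma> = rk (gk n f) n" using h1 sp_iff[OF perm] unfolding image_of_outcome_def by auto
  have f': "f' \<in> PP_set n antichain m" "image_mset f' (mset_set {1..n}) = target_mset A"
    "\<sigma> = rk (gk n f') n" using h2 sp_iff[OF perm] unfolding image_of_outcome_def by auto
  have cd: "card {x\<in>{1..n}. zkey (f x) < t} = card {x\<in>{1..n}. zkey (f' x) < t}" for t
    using size_filter_image[of "\<lambda>v. zkey v < t" f n] size_filter_image[of "\<lambda>v. zkey v < t" f' n]
      f(2) f'(2) by simp
  have z: "zkey (f x) = zkey (f' x)" if "x \<in> {1..n}" for x
  proof (rule downset_eq[where S="{1..n}" and \<sigma>=\<sigma> and h="\<lambda>x. zkey (f x)" and h'="\<lambda>x. zkey (f' x)"])
    show "inj_on \<sigma> {1..n}" by (rule permutes_inj_on[OF perm])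
    show "zkey (f i) \<le> zkey (f j)" if "i \<in> {1..n}" "j \<in> {1..n}" "\<sigma> i < \<sigma> j" for i j
      using rk_mono_zkey[OF that(1,2)] that(3) f(3) by simp
    show "zkey (f' i) \<le> zkey (f' j)" if "i \<in> {1..n}" "j \<in> {1..n}" "\<sigma> i < \<sigma> j" for i j
      using rk_mono_zkey[OF that(1,2)] that(3) f'(3) by simp
    show "finite {1..n}" by simp
    show "card {x\<in>{1..n}. zkey (f x) < t} = card {x\<in>{1..n}. zkey (f' x) < t}" for t by (rule cd)
    show "x \<in> {1..n}" by (rule that)
  qed
  show ?thesis
  proof (rule PiE_ext)
    show "f \<in> {1..n} \<rightarrow>\<^sub>E UNIV" "f' \<in> {1..n} \<rightarrow>\<^sub>E UNIV"
      using f(1) f'(1) unfolding PP_set_def by (simp_all only: mem_Collect_eq)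
    fix i assume "i \<in> {1..n}" then show "f i = f' i" using z[of i] by (simp add: zkey_inj)
  qed
qed

lemma injectivity:
  assumes o1: "(A, \<sigma>) \<in> updown_outcomes n m" and o2: "(A', \<sigma>') \<in> updown_outcomes n m"
    and h1: "image_of_outcome n m A \<sigma> f" and h2: "image_of_outcome n m A' \<sigma>' f"
  shows "A = A' \<and> \<sigma> = \<sigma>'"
proof
  have "\<sigma> = rk (gk n f) n" using h1 sp_iff[OF outcomesD(3)[OF o1]] unfolding image_of_outcome_def by auto
  moreover have "\<sigma>' = rk (gk n f) n" using h2 sp_iff[OF outcomesD(3)[OF o2]] unfolding image_of_outcome_def by auto
  ultimately show "\<sigma> = \<sigma>'" by simp
  have t: "target_mset A = target_mset A'" using h1 h2 unfolding image_of_outcome_def by simp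
  have l: "length A = length A'" using outcomesD(1)[OF o1] outcomesD(1)[OF o2] by simp
  show "A = A'"
  proof (rule nth_equalityI[OF l])
    fix k assume k: "k < length A"
    have "count (target_mset A) (block_val k) = count (target_mset A') (block_val k)" using t by simp
    then show "A ! k = A' ! k" using target_count[of A "block_val k"] target_count[of A' "block_val k"] k l
      by simp
  qed
qed



definition Af :: "nat \<Rightarrow> nat \<Rightarrow> (nat \<Rightarrow> int) \<Rightarrow> nat list" where
  "Af n m f = map (\<lambda>k. card {y\<in>{1..n}. zkey (f y) = k}) [0..<2*m+1]"

lemma Af_len[simp]: "length (Af n m f) = 2*m+1" unfolding Af_def by simp

lemma Af_nth: "k < 2*m+1 \<Longrightarrow> Af n m f ! k = card {y\<in>{1..n}. zkey (f y) = k}"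
  unfolding Af_def by (subst nth_map) (simp_all del: upt_Suc)

lemma pre_Af: "k \<le> 2*m+1 \<Longrightarrow> pre (Af n m f) k = card {y\<in>{1..n}. zkey (f y) < k}"
proof (induction k)
  case 0 then show ?case by simp
next
  case (Suc k)
  then have k: "k < length (Af n m f)" by simp
  have un: "{y\<in>{1..n}. zkey (f y) < Suc k} = {y\<in>{1..n}. zkey (f y) < k} \<union> {y\<in>{1..n}. zkey (f y) = k}"
    by auto
  have "card {y\<in>{1..n}. zkey (f y) < Suc k} = card {y\<in>{1..n}. zkey (f y) < k} + card {y\<in>{1..n}. zkey (f y) = k}"
    unfolding un by (rule card_Un_disjoint) auto
  then show ?case using pre_Suc[OF k] Suc Af_nth[of k m n f] by simp
qed

lemma surj_part:
  assumes PP: "f \<in> PP_set n antichain m"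
  shows "(Af n m f, rk (gk n f) n) \<in> updown_outcomes n m \<and> image_of_outcome n m (Af n m f) (rk (gk n f) n) f"
proof -
  let ?A = "Af n m f" and ?s = "rk (gk n f) n"
  have bnd: "zkey (f x) < 2*m+1" if "x \<in> {1..n}" for x
  proof -
    have "\<bar>f x\<bar> \<le> int m" using PP that unfolding PP_set_def by blast
    then show ?thesis by (rule zkey_bound)
  qed
  have perm: "?s permutes {1..n}" by (rule rk_permutes[OF gk_inj])
  have ms: "image_mset f (mset_set {1..n}) = target_mset ?A"
  proof (rule multiset_eqI)
    fix v
    have c1: "count (image_mset f (mset_set {1..n})) v = card {x\<in>{1..n}. f x = v}"
      by (simp add: count_image_mset_eq_card_vimage)
    show "count (image_mset f (mset_set {1..n})) v = count (target_mset ?A) v"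
    proof (cases "zkey v < 2*m+1")
      case True
      have "{x\<in>{1..n}. f x = v} = {y\<in>{1..n}. zkey (f y) = zkey v}" by (simp add: zkey_inj)
      then show ?thesis using c1 target_count[of ?A v] True Af_nth[OF True, of n f] by simp
    next
      case False
      have "{x\<in>{1..n}. f x = v} = {}" using bnd False by fastforce
      then show ?thesis using c1 target_count[of ?A v] False by simp
    qed
  qed
  have sm: "sum_list ?A = n"
  proof -
    have "sum_list ?A = size (target_mset ?A)" by (simp add: size_target)
    also have "\<dots> = size (image_mset f (mset_set {1..n}))" using ms by simp
    finally show ?thesis by simp
  qed
  have inb: "in_block ?A (zkey (f x)) (?s x)" if x: "x \<in> {1..n}" for x
  proof -
    define k where "k = zkey (f x)"
    have k: "k < 2*m+1" using bnd[OF x] k_def by simp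
    let ?L = "{y\<in>{1..n}. zkey (f y) < k}" and ?G = "{y\<in>{1..n}. gk n f y < gk n f x}"
      and ?U = "{y\<in>{1..n}. zkey (f y) < Suc k}"
    have LG: "?L \<subseteq> ?G"
    proof
      fix y assume y: "y \<in> ?L"
      then have "Rel f y x" unfolding Rel_def zless_def k_def by simp
      then show "y \<in> ?G" using gk_iff[of y n x f] x y by simp
    qed
    have GU: "?G \<subseteq> ?U - {x}"
    proof
      fix y assume y: "y \<in> ?G"
      then have "Rel f y x" using gk_iff[of y n x f] x by simp
      then have "zkey (f y) \<le> k" unfolding Rel_def zless_def k_def by auto
      then show "y \<in> ?U - {x}" using y by auto
    qed
    have c1: "card ?L \<le> card ?G" by (rule card_mono[OF _ LG]) simp
    have "card ?G \<le> card (?U - {x})" by (rule card_mono[OF _ GU]) simp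
    also have "\<dots> = card ?U - 1" using x k_def by simp
    finally have c2: "card ?G \<le> card ?U - 1" .
    have "x \<in> ?U" using x k_def by simp
    then have "card ?U > 0" by (intro card_gt_0_iff[THEN iffD2]) auto
    then have "card ?U \<ge> 1" by simp
    moreover have "?s x = card ?G + 1" using x unfolding rk_def by simp
    moreover have "pre ?A k = card ?L" using pre_Af[of k m n f] k by simp
    moreover have "pre ?A (Suc k) = card ?U" using pre_Af[of "Suc k" m n f] k by simp
    ultimately show ?thesis using c1 c2 unfolding in_block_def k_def[symmetric] by simp
  qed
  have le: "inv ?s p < inv ?s q" if pq: "p \<in> {1..n}" "q \<in> {1..n}" "P_A ?A p q" for p q
  proof -
    define x where "x = inv ?s p"
    define y where "y = inv ?s q"
    have xS: "x \<in> {1..n}" "y \<in> {1..n}" using pq permutes_in_image[OF permutes_inv[OF perm]]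
      unfolding x_def y_def by auto
    have sx: "?s x = p" "?s y = q" unfolding x_def y_def by (simp_all add: permutes_inverses(1)[OF perm])
    obtain k where k: "k < length ?A" "in_block ?A k p" "in_block ?A k q" "if even k then p < q else q < p"
      using pq(3) unfolding P_A_def by blast
    have zx: "zkey (f x) = k" using block_uniq[OF inb[OF xS(1)]] k(2) sx by simp
    have zy: "zkey (f y) = k" using block_uniq[OF inb[OF xS(2)]] k(3) sx by simp
    have "zkey (f x) = zkey (f y)" using zx zy by simp
    then have eq: "f x = f y" by (simp add: zkey_inj)
    have ev: "even k \<longleftrightarrow> f x \<ge> 0" using zkey_even[of "f x"] zx by simp
    have nR: "\<not> Rel f b a" if "a \<in> {1..n}" "b \<in> {1..n}" "?s a < ?s b" for a b
    proof
      assume "Rel f b a"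
      then have "gk n f b < gk n f a" using gk_iff[OF that(2,1)] by simp
      then have "?s b < ?s a" by (rule rk_mono[OF that(2,1)])
      then show False using that(3) by simp
    qed
    show ?thesis
    proof (cases "even k")
      case True
      then have "?s x < ?s y" using k(4) sx by simp
      then have "\<not> Rel f y x" by (rule nR[OF xS(1) xS(2)])
      moreover have "x \<noteq> y" using \<open>?s x < ?s y\<close> by auto
      ultimately have "Rel f x y" using Rel_total[of x y f] by blast
      then have "x < y" using eq ev True unfolding Rel_def zless_def by auto
      then show ?thesis unfolding x_def y_def .
    next
      case False
      then have "?s y < ?s x" using k(4) sx by simp
      then have "\<not> Rel f x y" by (rule nR[OF xS(2) xS(1)])
      moreover have "x \<noteq> y" using \<open>?s y < ?s x\<close> by auto
      ultimately have "Rel f y x" using Rel_total[of x y f] by blast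
      then have "x < y" using eq ev False unfolding Rel_def zless_def by auto
      then show ?thesis unfolding x_def y_def .
    qed
  qed
  have w: "?A \<in> wcomps n m" unfolding wcomps_def using sm by simp
  have l: "?s \<in> lin_ext n (P_A ?A)" unfolding lin_ext_def chain_less_def using perm le by blast
  have o: "(?A, ?s) \<in> updown_outcomes n m"
    unfolding updown_outcomes_def using w l by simp
  have "image_of_outcome n m ?A ?s f"
    unfolding image_of_outcome_def using PP ms sp_iff[OF perm] by simp
  then show ?thesis using o by simp
qed



theorem proposition2p7:
  fixes n m :: nat
  assumes "n \<ge> 1" and "m \<ge> 1"
  shows "(\<forall>(A, \<sigma>) \<in> updown_outcomes n m. \<exists>!f. image_of_outcome n m A \<sigma> f)
       \<and> bij_betw (updown_map n m) (updown_outcomes n m) (PP_set n antichain m)"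
proof -
  have uniq: "image_of_outcome n m A \<sigma> f \<Longrightarrow> image_of_outcome n m A \<sigma> f' \<Longrightarrow> f = f'"
    if "(A, \<sigma>) \<in> updown_outcomes n m" for A \<sigma> f f'
    using uniqueness[OF outcomesD(3)[OF that]] by blast
  have mapeq: "updown_map n m (A, \<sigma>) = f"
    if o: "(A, \<sigma>) \<in> updown_outcomes n m" and h: "image_of_outcome n m A \<sigma> f" for A \<sigma> f
    unfolding updown_map_def prod.case
    by (rule the_equality[where P="image_of_outcome n m A \<sigma>"]) (rule h, erule uniq[OF o _ h])
  have mapin: "image_of_outcome n m A \<sigma> (updown_map n m (A, \<sigma>))"
    if o: "(A, \<sigma>) \<in> updown_outcomes n m" for A \<sigma>
    using mapeq[OF o existence[OF o]] existence[OF o] by simp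
  have P1: "\<forall>(A, \<sigma>) \<in> updown_outcomes n m. \<exists>!f. image_of_outcome n m A \<sigma> f"
  proof (intro ballI)
    fix p assume p: "p \<in> updown_outcomes n m"
    obtain A \<sigma> where pe: "p = (A, \<sigma>)" by (cases p)
    have o: "(A, \<sigma>) \<in> updown_outcomes n m" using p pe by simp
    have "\<exists>!f. image_of_outcome n m A \<sigma> f"
      by (rule ex1I[of _ "F0 n A \<sigma>"]) (rule existence[OF o], rule uniq[OF o _ existence[OF o]])
    then show "case p of (A, \<sigma>) \<Rightarrow> \<exists>!f. image_of_outcome n m A \<sigma> f" using pe by simp
  qed
  have inj: "inj_on (updown_map n m) (updown_outcomes n m)"
  proof (rule inj_onI)
    fix p q assume p: "p \<in> updown_outcomes n m" and q: "q \<in> updown_outcomes n m"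
      and e: "updown_map n m p = updown_map n m q"
    obtain A \<sigma> where pe: "p = (A, \<sigma>)" by (cases p)
    obtain A' \<sigma>' where qe: "q = (A', \<sigma>')" by (cases q)
    have o1: "(A, \<sigma>) \<in> updown_outcomes n m" using p pe by simp
    have o2: "(A', \<sigma>') \<in> updown_outcomes n m" using q qe by simp
    have h1: "image_of_outcome n m A \<sigma> (updown_map n m (A, \<sigma>))" by (rule mapin[OF o1])
    have h2: "image_of_outcome n m A' \<sigma>' (updown_map n m (A, \<sigma>))"
      using mapin[OF o2] e pe qe by simp
    show "p = q" using injectivity[OF o1 o2 h1 h2] pe qe by simp
  qed
  have img: "updown_map n m ` updown_outcomes n m = PP_set n antichain m"
  proof
    show "updown_map n m ` updown_outcomes n m \<subseteq> PP_set n antichain m"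
    proof
      fix f assume "f \<in> updown_map n m ` updown_outcomes n m"
      then obtain p where p: "p \<in> updown_outcomes n m" "f = updown_map n m p" by blast
      obtain A \<sigma> where pe: "p = (A, \<sigma>)" by (cases p)
      have o: "(A, \<sigma>) \<in> updown_outcomes n m" using p pe by simp
      show "f \<in> PP_set n antichain m" using mapin[OF o] p pe unfolding image_of_outcome_def by simp
    qed
    show "PP_set n antichain m \<subseteq> updown_map n m ` updown_outcomes n m"
    proof
      fix f assume f: "f \<in> PP_set n antichain m"
      note s = surj_part[OF f]
      have "updown_map n m (Af n m f, rk (gk n f) n) = f" using mapeq s by blast
      then show "f \<in> updown_map n m ` updown_outcomes n m" using s by force
    qed
  qed
  show ?thesis using P1 inj img unfolding bij_betw_def by simp
qed

end
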